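(* For a $d$-regular simple graph on $n$ vertices quantised with equi-transmitting scattering matrices, for every $f\in G_1$ and every integer $t\ge0$, $$\psi\big(\hat C^t\tilde\varphi(f)\big)=M^tf.$$
   Context: For directed bond $b$, $o(b),t(b)$ are origin and terminus, $\bar b$ its reversal. For equi-transmitting quantisation, $M$ is the $2B\times2B$ matrix with $M_{bc}=\frac1{d-1}$ if $t(b)=o(c)$ and $c\ne\bar b$, and $0$ otherwise. $e_v\in\mathbb{C}^{2B}$ has component $1$ on each directed bond with origin $v$, $0$ elsewhere; $\tilde e_v$ has component $1$ on each directed bond with terminus $v$, $0$ elsewhere. $G_1=\mathrm{span}\{e_1,\dots,e_n\}$. $\tilde\varphi:G_1\to\mathbb{C}^{2n}$ maps $\sum_va_ve_v$ to $(a_1,\dots,a_n,0,\dots,0)^T$. $\psi:\mathbb{C}^{2n}\to\mathbb{C}^{2B}$ is $\psi(\mathbf a,\mathbf b)=\sum_va_ve_v+\sum_vb_v\tilde e_v$. $C$ is the $n\times n$ connectivity (adjacency) matrix and $\hat C=\begin{pmatrix}0&-\frac1{d-1}I_n\\ I_n&\frac1{d-1}C\end{pmatrix}$. *)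

theory Defs
  imports Complex_Main
begin

text \<open>Matrices are represented by their entry functions, acting on vectors
  (functions) indexed by a finite index set I.\<close>

definition mmult :: "'i set \<Rightarrow> ('i \<Rightarrow> 'i \<Rightarrow> complex) \<Rightarrow> ('i \<Rightarrow> 'i \<Rightarrow> complex) \<Rightarrow> ('i \<Rightarrow> 'i \<Rightarrow> complex)" where
  "mmult I A B = (\<lambda>i j. \<Sum>k\<in>I. A i k * B k j)"

fun mpow :: "'i set \<Rightarrow> ('i \<Rightarrow> 'i \<Rightarrow> complex) \<Rightarrow> nat \<Rightarrow> ('i \<Rightarrow> 'i \<Rightarrow> complex)" where
  "mpow I A 0 = (\<lambda>i j. if i = j then 1 else 0)"
| "mpow I A (Suc t) = mmult I (mpow I A t) A"

definition mvec :: "'i set \<Rightarrow> ('i \<Rightarrow> 'i \<Rightarrow> complex) \<Rightarrow> ('i \<Rightarrow> complex) \<Rightarrow> ('i \<Rightarrow> complex)" where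
  "mvec I A x = (\<lambda>i. \<Sum>j\<in>I. A i j * x j)"

definition simple_graph :: "nat \<Rightarrow> (nat \<Rightarrow> nat \<Rightarrow> bool) \<Rightarrow> bool" where
  "simple_graph n E \<longleftrightarrow> (\<forall>u v. E u v \<longrightarrow> u \<in> {1..n} \<and> v \<in> {1..n}) \<and>
     (\<forall>u v. E u v \<longrightarrow> E v u) \<and> (\<forall>v. \<not> E v v)"

definition regular :: "nat \<Rightarrow> (nat \<Rightarrow> nat \<Rightarrow> bool) \<Rightarrow> nat \<Rightarrow> bool" where
  "regular n E d \<longleftrightarrow> (\<forall>v\<in>{1..n}. card {u. E v u} = d)"

definition dbonds :: "(nat \<Rightarrow> nat \<Rightarrow> bool) \<Rightarrow> (nat \<times> nat) set" where
  "dbonds E = {(u, v). E u v}"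

definition orig :: "nat \<times> nat \<Rightarrow> nat" where "orig b = fst b"
definition termin :: "nat \<times> nat \<Rightarrow> nat" where "termin b = snd b"
definition rev_bond :: "nat \<times> nat \<Rightarrow> nat \<times> nat" where "rev_bond b = (snd b, fst b)"

definition Mmat :: "nat \<Rightarrow> nat \<times> nat \<Rightarrow> nat \<times> nat \<Rightarrow> complex" where
  "Mmat d b c = (if termin b = orig c \<and> c \<noteq> rev_bond b then 1 / (of_nat d - 1) else 0)"

definition e_out :: "nat \<Rightarrow> nat \<times> nat \<Rightarrow> complex" where
  "e_out v b = (if orig b = v then 1 else 0)"

definition e_in :: "nat \<Rightarrow> nat \<times> nat \<Rightarrow> complex" where
  "e_in v b = (if termin b = v then 1 else 0)"

text \<open>Connectivity matrix C on {1..n} and the 2n x 2n matrix C-hat on indices {1..2n}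
  (indices 1..n: first block, n+1..2n: second block).\<close>

definition Cmat :: "(nat \<Rightarrow> nat \<Rightarrow> bool) \<Rightarrow> nat \<Rightarrow> nat \<Rightarrow> complex" where
  "Cmat E u v = (if E u v then 1 else 0)"

definition Chat :: "nat \<Rightarrow> (nat \<Rightarrow> nat \<Rightarrow> bool) \<Rightarrow> nat \<Rightarrow> nat \<Rightarrow> nat \<Rightarrow> complex" where
  "Chat n E d i j =
     (if i \<le> n then (if j \<le> n then 0 else (if j - n = i then - 1 / (of_nat d - 1) else 0))
      else (if j \<le> n then (if i - n = j then 1 else 0)
            else Cmat E (i - n) (j - n) / (of_nat d - 1)))"

text \<open>Elements of G_1 written as sum_v a_v e_v; the map phi-tilde and psi.\<close>

definition G1_elem :: "nat \<Rightarrow> (nat \<Rightarrow> complex) \<Rightarrow> nat \<times> nat \<Rightarrow> complex" where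
  "G1_elem n a = (\<lambda>b. \<Sum>v\<in>{1..n}. a v * e_out v b)"

definition phi_tilde :: "nat \<Rightarrow> (nat \<Rightarrow> complex) \<Rightarrow> nat \<Rightarrow> complex" where
  "phi_tilde n a = (\<lambda>i. if i \<in> {1..n} then a i else 0)"

definition psi :: "nat \<Rightarrow> (nat \<Rightarrow> complex) \<Rightarrow> nat \<times> nat \<Rightarrow> complex" where
  "psi n x = (\<lambda>b. (\<Sum>v\<in>{1..n}. x v * e_out v b) + (\<Sum>v\<in>{1..n}. x (n + v) * e_in v b))"

end

theory Submission
  imports Defs
begin

lemma mvec_mpow_Suc:
  assumes "finite I"
  shows "mvec I (mpow I A (Suc t)) x = mvec I (mpow I A t) (mvec I A x)"
  using assms
  by (simp add: mvec_def mmult_def sum_distrib_left sum_distrib_right mult.assoc fun_eq_iff;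
      subst sum.swap; simp)

lemma mvec_cong: "(\<And>j. j \<in> I \<Longrightarrow> x j = y j) \<Longrightarrow> mvec I A x b = mvec I A y b"
  unfolding mvec_def by (rule sum.cong) auto

lemma bond_props:
  assumes "simple_graph n E" "b \<in> dbonds E"
  shows "E (fst b) (snd b)" "fst b \<in> {1..n}" "snd b \<in> {1..n}"
  using assms by (auto simp: simple_graph_def dbonds_def)

lemma psi_bond:
  assumes "simple_graph n E" "b \<in> dbonds E"
  shows "psi n y b = y (fst b) + y (n + snd b)"
proof -
  have f: "fst b \<in> {1..n}" "snd b \<in> {1..n}" using bond_props[OF assms] by auto
  have 1: "(\<Sum>v\<in>{1..n}. y v * e_out v b) = y (fst b)"
    using f by (simp add: e_out_def orig_def if_distrib cong: if_cong)
  have 2: "(\<Sum>v\<in>{1..n}. y (n + v) * e_in v b) = y (n + snd b)"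
    using f by (simp add: e_in_def termin_def if_distrib cong: if_cong)
  show ?thesis unfolding psi_def using 1 2 by simp
qed

lemma Chat_top:
  assumes "i \<in> {1..n}"
  shows "mvec {1..2*n} (Chat n E d) x i = - x (n+i) / (of_nat d - 1)"
proof -
  have "mvec {1..2*n} (Chat n E d) x i
      = (\<Sum>j\<in>{1..2*n}. if j = n + i then - x j / (of_nat d - 1) else 0)"
    unfolding mvec_def using assms
    by (intro sum.cong) (auto simp: Chat_def)
  also have "\<dots> = - x (n+i) / (of_nat d - 1)"
    using assms by (simp add: sum.delta')
  finally show ?thesis .
qed

lemma Chat_bot:
  assumes g: "simple_graph n E" and w: "w \<in> {1..n}"
  shows "mvec {1..2*n} (Chat n E d) x (n+w)
     = x w + (\<Sum>v\<in>{v. E w v}. x (n+v)) / (of_nat d - 1)"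
proof -
  have split: "{1..2*n} = {1..n} \<union> (\<lambda>v. n + v) ` {1..n}"
    by (auto simp: image_iff)
  have disj: "{1..n} \<inter> (\<lambda>v. n + v) ` {1..n} = {}" by auto
  have "mvec {1..2*n} (Chat n E d) x (n+w)
      = (\<Sum>j\<in>{1..n}. Chat n E d (n+w) j * x j)
        + (\<Sum>j\<in>(\<lambda>v. n + v) ` {1..n}. Chat n E d (n+w) j * x j)"
    unfolding mvec_def split by (rule sum.union_disjoint) (use disj in auto)
  also have "(\<Sum>j\<in>{1..n}. Chat n E d (n+w) j * x j) = (\<Sum>j\<in>{1..n}. if j = w then x j else 0)"
    using w by (intro sum.cong) (auto simp: Chat_def)
  also have "\<dots> = x w" using w by (simp add: sum.delta')
  also have "(\<Sum>j\<in>(\<lambda>v. n + v) ` {1..n}. Chat n E d (n+w) j * x j)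
      = (\<Sum>v\<in>{1..n}. Chat n E d (n+w) (n+v) * x (n+v))"
    by (subst sum.reindex) (auto simp: inj_on_def)
  also have "\<dots> = (\<Sum>v\<in>{1..n}. if E w v then x (n+v) / (of_nat d - 1) else 0)"
    using w by (intro sum.cong) (auto simp: Chat_def Cmat_def)
  also have "\<dots> = (\<Sum>v\<in>{v\<in>{1..n}. E w v}. x (n+v) / (of_nat d - 1))"
    by (rule sum.inter_filter[symmetric]) simp
  also have "{v\<in>{1..n}. E w v} = {v. E w v}"
    using g by (auto simp: simple_graph_def)
  also have "(\<Sum>v\<in>{v. E w v}. x (n+v) / (of_nat d - 1)) = (\<Sum>v\<in>{v. E w v}. x (n+v)) / (of_nat d - 1)"
    by (simp add: sum_divide_distrib)
  finally show ?thesis .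
qed

lemma finite_bonds:
  assumes "simple_graph n E" shows "finite (dbonds E)"
proof -
  have "dbonds E \<subseteq> {1..n} \<times> {1..n}" using assms by (auto simp: simple_graph_def dbonds_def)
  thus ?thesis by (rule finite_subset) auto
qed

lemma M_bond:
  assumes g: "simple_graph n E" and b: "b \<in> dbonds E"
  shows "mvec (dbonds E) (Mmat d) z b
     = (\<Sum>v\<in>{v. E (snd b) v} - {fst b}. z (snd b, v)) / (of_nat d - 1)"
proof -
  obtain u w where bu: "b = (u, w)" by (cases b)
  have "mvec (dbonds E) (Mmat d) z b
     = (\<Sum>c\<in>dbonds E. if fst c = w \<and> c \<noteq> (w,u) then z c / (of_nat d - 1) else 0)"
    unfolding mvec_def bu by (intro sum.cong) (auto simp: Mmat_def termin_def orig_def rev_bond_def)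
  also have "\<dots> = (\<Sum>c\<in>{c\<in>dbonds E. fst c = w \<and> c \<noteq> (w,u)}. z c / (of_nat d - 1))"
    by (simp add: sum.inter_filter finite_bonds[OF g])
  also have "{c\<in>dbonds E. fst c = w \<and> c \<noteq> (w,u)} = (\<lambda>v. (w,v)) ` ({v. E w v} - {u})"
    by (auto simp: dbonds_def)
  also have "(\<Sum>c\<in>(\<lambda>v. (w,v)) ` ({v. E w v} - {u}). z c / (of_nat d - 1))
     = (\<Sum>v\<in>{v. E w v} - {u}. z (w,v) / (of_nat d - 1))"
    by (subst sum.reindex) (auto simp: inj_on_def)
  also have "\<dots> = (\<Sum>v\<in>{v. E w v} - {u}. z (w,v)) / (of_nat d - 1)"
    by (simp add: sum_divide_distrib)
  finally show ?thesis using bu by simp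
qed

lemma key:
  assumes g: "simple_graph n E" and r: "regular n E d" and d: "d \<ge> 2" and b: "b \<in> dbonds E"
  shows "psi n (mvec {1..2*n} (Chat n E d) x) b = mvec (dbonds E) (Mmat d) (psi n x) b"
proof -
  obtain u w where bu: "b = (u, w)" by (cases b)
  have E: "E u w" "u \<in> {1..n}" "w \<in> {1..n}" using bond_props[OF g b] bu by auto
  have Ewu: "E w u" using g E by (auto simp: simple_graph_def)
  have fin: "finite {v. E w v}"
    by (rule finite_subset[of _ "{1..n}"]) (use g in \<open>auto simp: simple_graph_def\<close>)
  have card: "card {v. E w v} = d" using r E by (auto simp: regular_def)
  have dne: "(of_nat d - 1 :: complex) \<noteq> 0" using d
    by (metis diff_0_eq_0 diff_numeral_special(9) eq_iff_diff_eq_0 le_numeral_extra(3) numeral_le_one_iff of_nat_1 of_nat_eq_iff of_nat_le_iff semiring_norm(69))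
  have S: "(\<Sum>v\<in>{v. E w v} - {u}. psi n x (w, v))
      = (of_nat (d - 1)) * x w + (\<Sum>v\<in>{v. E w v} - {u}. x (n + v))"
  proof -
    have "(\<Sum>v\<in>{v. E w v} - {u}. psi n x (w, v)) = (\<Sum>v\<in>{v. E w v} - {u}. x w + x (n + v))"
      by (intro sum.cong refl) (subst psi_bond[OF g], auto simp: dbonds_def)
    also have "\<dots> = of_nat (card ({v. E w v} - {u})) * x w + (\<Sum>v\<in>{v. E w v} - {u}. x (n + v))"
      by (simp add: sum.distrib)
    also have "card ({v. E w v} - {u}) = d - 1" using card Ewu fin by simp
    finally show ?thesis .
  qed
  have R: "(\<Sum>v\<in>{v. E w v}. x (n + v)) = x (n + u) + (\<Sum>v\<in>{v. E w v} - {u}. x (n + v))"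
    using fin Ewu by (simp add: sum.remove)
  have ofd: "(of_nat (d - 1) :: complex) = of_nat d - 1" using d by (simp add: of_nat_diff)
  have alg: "\<And>(D::complex) a w s. D \<noteq> 0 \<Longrightarrow> - a / D + (w + (a + s) / D) = (D * w + s) / D"
    by (simp add: field_simps)
  have "psi n (mvec {1..2*n} (Chat n E d) x) b
     = mvec {1..2*n} (Chat n E d) x u + mvec {1..2*n} (Chat n E d) x (n+w)"
    using psi_bond[OF g b] bu by simp
  also have "\<dots> = - x (n+u) / (of_nat d - 1) + (x w + (\<Sum>v\<in>{v. E w v}. x (n+v)) / (of_nat d - 1))"
    by (simp only: Chat_top[OF E(2)] Chat_bot[OF g E(3)])
  also have "\<dots> = mvec (dbonds E) (Mmat d) (psi n x) b"
  proof -
    have Mb: "mvec (dbonds E) (Mmat d) (psi n x) b = (\<Sum>v\<in>{v. E w v} - {u}. psi n x (w, v)) / (of_nat d - 1)"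
      using M_bond[OF g b] bu by simp
    show ?thesis unfolding Mb S R ofd by (rule alg[OF dne])
  qed
  finally show ?thesis .
qed

theorem proposition7:
  fixes n d :: nat and E :: "nat \<Rightarrow> nat \<Rightarrow> bool" and a :: "nat \<Rightarrow> complex" and t :: nat
  assumes "simple_graph n E" and "regular n E d" and "d \<ge> 2"
  shows "\<forall>b\<in>dbonds E.
    psi n (mvec {1..2*n} (mpow {1..2*n} (Chat n E d) t) (phi_tilde n a)) b
      = mvec (dbonds E) (mpow (dbonds E) (Mmat d) t) (G1_elem n a) b"
proof -
  note g = assms(1)
  have main: "\<forall>x. \<forall>b\<in>dbonds E. psi n (mvec {1..2*n} (mpow {1..2*n} (Chat n E d) t) x) b
      = mvec (dbonds E) (mpow (dbonds E) (Mmat d) t) (psi n x) b"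
  proof (induction t)
    case 0
    show ?case
    proof (intro allI ballI)
      fix x b assume b: "b \<in> dbonds E"
      have l: "mvec {1..2*n} (mpow {1..2*n} (Chat n E d) 0) x = (\<lambda>i. if i \<in> {1..2*n} then x i else 0)"
      proof -
        have "\<And>i. (\<Sum>j\<in>{1..2*n}. (if i = j then 1 else 0) * x j) = (\<Sum>j\<in>{1..2*n}. if i = j then x j else 0)"
          by (intro sum.cong) auto
        then show ?thesis by (simp add: mvec_def fun_eq_iff)
      qed
      have r: "mvec (dbonds E) (mpow (dbonds E) (Mmat d) 0) (psi n x) b = psi n x b"
      proof -
        have "(\<Sum>j\<in>dbonds E. (if b = j then 1 else 0) * psi n x j) = (\<Sum>j\<in>dbonds E. if b = j then psi n x j else 0)"
          by (intro sum.cong) auto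
        then show ?thesis using b finite_bonds[OF g] by (simp add: mvec_def)
      qed
      show "psi n (mvec {1..2*n} (mpow {1..2*n} (Chat n E d) 0) x) b
          = mvec (dbonds E) (mpow (dbonds E) (Mmat d) 0) (psi n x) b"
        unfolding r l using bond_props[OF g b]
        by (simp add: psi_bond[OF g b])
    qed
  next
    case (Suc t)
    show ?case
    proof (intro allI ballI)
      fix x b assume b: "b \<in> dbonds E"
      have "psi n (mvec {1..2*n} (mpow {1..2*n} (Chat n E d) (Suc t)) x) b
          = psi n (mvec {1..2*n} (mpow {1..2*n} (Chat n E d) t) (mvec {1..2*n} (Chat n E d) x)) b"
        by (simp only: mvec_mpow_Suc[OF finite_atLeastAtMost])
      also have "\<dots> = mvec (dbonds E) (mpow (dbonds E) (Mmat d) t) (psi n (mvec {1..2*n} (Chat n E d) x)) b"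
        using Suc b by blast
      also have "\<dots> = mvec (dbonds E) (mpow (dbonds E) (Mmat d) t) (mvec (dbonds E) (Mmat d) (psi n x)) b"
        by (rule mvec_cong) (rule key[OF assms])
      also have "\<dots> = mvec (dbonds E) (mpow (dbonds E) (Mmat d) (Suc t)) (psi n x) b"
        by (simp only: mvec_mpow_Suc[OF finite_bonds[OF g]])
      finally show "psi n (mvec {1..2*n} (mpow {1..2*n} (Chat n E d) (Suc t)) x) b
          = mvec (dbonds E) (mpow (dbonds E) (Mmat d) (Suc t)) (psi n x) b" .
    qed
  qed
  have pg: "psi n (phi_tilde n a) = G1_elem n a"
    by (simp add: psi_def G1_elem_def phi_tilde_def fun_eq_iff)
  show ?thesis using main pg by metis
qed

end
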